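(* Let $n\ge4$ and let $I\subseteq\mathbb K[x_1,\dots,x_n]$ be a good ideal. Then $I^k$ is a bad ideal for every integer $k\ge2$.
   Context: Let $\mathbb K$ be a field, $R=\mathbb K[x_1,\dots,x_n]$, $\mathfrak m=\langle x_1,\dots,x_n\rangle$, $\mathbb N=\{0,1,2,\dots\}$. A monomial $x_1^{\alpha_1}\cdots x_n^{\alpha_n}$ is identified with the point $(\alpha_1,\dots,\alpha_n)\in\mathbb N^n$. For a monomial ideal $I$, $G(I)$ denotes its (unique) minimal monomial generating set. If $I$ is an $\mathfrak m$-primary monomial ideal, then for each $i$ there is a unique $d_i\ge1$ with $x_i^{d_i}\in G(I)$; write $\mu_i=x_i^{d_i}$. For $(a_1,\dots,a_n)\in\mathbb N^n$ the box associated to $I$ is $B_{a_1,\dots,a_n}=([a_1d_1,(a_1+1)d_1]\times\cdots\times[a_nd_n,(a_n+1)d_n])\cap\mathbb N^n$; a monomial belongs to a box if its exponent vector does. An $\mathfrak m$-primary monomial ideal $I$ is called good if for every integer $l\ge1$, every element of $G(I^l)$ belongs to some box $B_{a_1,\dots,a_n}$ with $a_1+\dots+a_n=l-1$; otherwise bad. (Goodness of $I^k$ is defined with respect to its own pure powers $x_i^{kd_i}\in G(I^k)$.) *)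

theory Defs
  imports Main
begin

text \<open>Monomials of K[x_i | i :: 'n] are identified with exponent vectors 'n \<Rightarrow> nat
  (the finite type 'n indexes the variables, n = CARD('n)).  A monomial ideal I is
  identified with the set of exponent vectors of the monomials it contains; this set is
  an upward closed subset of N^n, and conversely every such set determines a unique
  monomial ideal.  The field K plays no role in the combinatorics.\<close>

type_synonym 'n expvec = "'n \<Rightarrow> nat"

definition monomial_ideal :: "'n expvec set \<Rightarrow> bool" where
  "monomial_ideal E \<longleftrightarrow> (\<forall>a\<in>E. \<forall>b. a \<le> b \<longrightarrow> b \<in> E)"

definition pure :: "'n \<Rightarrow> nat \<Rightarrow> 'n expvec" where
  "pure i d = (\<lambda>j. if j = i then d else 0)"

definition m_primary :: "'n expvec set \<Rightarrow> bool" where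
  "m_primary E \<longleftrightarrow> monomial_ideal E \<and> (\<lambda>_. 0) \<notin> E \<and> (\<forall>i. \<exists>d. pure i d \<in> E)"

definition pdeg :: "'n expvec set \<Rightarrow> 'n \<Rightarrow> nat" where
  "pdeg E i = (LEAST d. pure i d \<in> E)"

definition gens :: "'n expvec set \<Rightarrow> 'n expvec set" where
  "gens E = {a \<in> E. \<forall>b\<in>E. b \<le> a \<longrightarrow> b = a}"

definition mprod :: "'n expvec set \<Rightarrow> 'n expvec set \<Rightarrow> 'n expvec set" where
  "mprod E F = {(\<lambda>i. a i + b i) | a b. a \<in> E \<and> b \<in> F}"

fun mpow :: "'n expvec set \<Rightarrow> nat \<Rightarrow> 'n expvec set" where
  "mpow E 0 = UNIV"
| "mpow E (Suc l) = mprod E (mpow E l)"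

definition in_box :: "'n expvec set \<Rightarrow> 'n expvec \<Rightarrow> 'n expvec \<Rightarrow> bool" where
  "in_box E a \<alpha> \<longleftrightarrow> (\<forall>i. a i * pdeg E i \<le> \<alpha> i \<and> \<alpha> i \<le> (a i + 1) * pdeg E i)"

definition good :: "('n::finite) expvec set \<Rightarrow> bool" where
  "good E \<longleftrightarrow> m_primary E \<and>
     (\<forall>l\<ge>1. \<forall>\<alpha>\<in>gens (mpow E l). \<exists>a. (\<Sum>i\<in>UNIV. a i) = l - 1 \<and> in_box E a \<alpha>)"

definition bad :: "('n::finite) expvec set \<Rightarrow> bool" where
  "bad E \<longleftrightarrow> m_primary E \<and> \<not> good E"

end

theory Submission
  imports Defs Complex_Main
begin

definition wt :: "('n::finite) expvec set \<Rightarrow> 'n expvec \<Rightarrow> real" where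
  "wt I g = (\<Sum>i\<in>UNIV. real (g i) / real (pdeg I i))"

lemma wt_add: "wt I (\<lambda>i. a i + b i) = wt I a + wt I b"
  unfolding wt_def by (simp add: add_divide_distrib sum.distrib)

lemma wt_mult: "wt I (\<lambda>i. m * a i) = real m * wt I a"
  unfolding wt_def by (simp add: sum_distrib_left)

lemma wt_zero: "wt I (\<lambda>_. 0) = 0"
  unfolding wt_def by simp

lemma wt_nonneg: "wt I a \<ge> 0"
  unfolding wt_def by (intro sum_nonneg) auto

lemma wt_pure: "wt I (pure i e) = real e / real (pdeg I i)"
proof -
  have "(\<Sum>j\<in>UNIV. real (pure i e j) / real (pdeg I j)) = (\<Sum>j\<in>UNIV. if j = i then real e / real (pdeg I i) else 0)"
    by (intro sum.cong) (auto simp: pure_def)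
  then show ?thesis unfolding wt_def by simp
qed

lemma wt_mono: "b \<le> a \<Longrightarrow> wt I b \<le> wt I a"
  unfolding wt_def by (intro sum_mono divide_right_mono) (auto simp: le_fun_def)

lemma wt_strict: assumes "\<forall>i. pdeg I i > 0" "b \<le> a" "b \<noteq> a"
  shows "wt I b < wt I a"
proof -
  obtain j where j: "b j \<noteq> a j" using assms(3) by auto
  have "b j < a j" using j assms(2) by (auto simp: le_fun_def order.not_eq_order_implies_strict)
  show ?thesis unfolding wt_def
  proof (rule sum_strict_mono_ex1)
    show "\<forall>x\<in>UNIV. real (b x) / real (pdeg I x) \<le> real (a x) / real (pdeg I x)"
      using assms(2) by (auto simp: le_fun_def intro: divide_right_mono)
    show "\<exists>x\<in>UNIV. real (b x) / real (pdeg I x) < real (a x) / real (pdeg I x)"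
      using \<open>b j < a j\<close> assms(1) by (intro bexI[of _ j]) (auto intro: divide_strict_right_mono)
  qed simp
qed

lemma mpow_wt: assumes "\<forall>g\<in>I. wt I g \<ge> 1"
  shows "b \<in> mpow I m \<Longrightarrow> wt I b \<ge> m"
proof (induction m arbitrary: b)
  case 0 then show ?case using wt_nonneg by simp
next
  case (Suc m)
  then obtain x y where "x \<in> I" "y \<in> mpow I m" "b = (\<lambda>i. x i + y i)" by (auto simp: mprod_def)
  then show ?case using Suc.IH[of y] assms wt_add[of I x y] by force
qed

lemma mpow_scal: "g \<in> I \<Longrightarrow> (\<lambda>i. m * g i) \<in> mpow I m"
proof (induction m)
  case 0 then show ?case by simp
next
  case (Suc m)
  have "(\<lambda>i. Suc m * g i) = (\<lambda>i. g i + (\<lambda>i. m * g i) i)" by auto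
  then show ?case using Suc by (auto simp: mprod_def)
qed

lemma pmem: assumes "p \<in> I"
  shows "z \<in> mpow I j \<Longrightarrow> (\<lambda>t. m * p t + z t) \<in> mpow I (m + j)"
proof (induction m)
  case 0 then show ?case by simp
next
  case (Suc m)
  have "(\<lambda>t. Suc m * p t + z t) = (\<lambda>t. p t + (\<lambda>t. m * p t + z t) t)" by auto
  then show ?case using Suc assms by (auto simp: mprod_def)
qed

lemma exists_gen:
  fixes E :: "('n::finite) expvec set"
  shows "x \<in> E \<Longrightarrow> \<exists>g\<in>gens E. g \<le> x"
proof (induction "\<Sum>i\<in>UNIV. x i" arbitrary: x rule: less_induct)
  case less
  show ?case
  proof (cases "x \<in> gens E")
    case True then show ?thesis by auto
  next
    case False
    then obtain b where b: "b \<in> E" "b \<le> x" "b \<noteq> x" using less.prems by (auto simp: gens_def)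
    obtain j where "b j \<noteq> x j" using b(3) by auto
    then have "b j < x j" using b(2) by (auto simp: le_fun_def order.not_eq_order_implies_strict)
    have "(\<Sum>i\<in>UNIV. b i) < (\<Sum>i\<in>UNIV. x i)"
      by (rule sum_strict_mono_ex1) (use b(2) \<open>b j < x j\<close> in \<open>auto simp: le_fun_def\<close>)
    then obtain g where "g \<in> gens E" "g \<le> b" using less.hyps b(1) by blast
    then show ?thesis using b(2) order_trans by blast
  qed
qed

lemma pdeg_pos: assumes "m_primary I" shows "pdeg I i > 0" and "pure i (pdeg I i) \<in> I"
proof -
  obtain d where "pure i d \<in> I" using assms by (auto simp: m_primary_def)
  then show P: "pure i (pdeg I i) \<in> I" unfolding pdeg_def by (rule LeastI)
  have "pure i 0 = (\<lambda>_. 0)" by (auto simp: pure_def)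
  then show "pdeg I i > 0" using P assms by (metis gr0I m_primary_def)
qed

lemma good_wt: assumes "good I" "g \<in> I" shows "wt I g \<ge> 1"
proof (rule ccontr)
  assume "\<not> wt I g \<ge> 1"
  define s where "s = wt I g"
  have s1: "s < 1" using \<open>\<not> wt I g \<ge> 1\<close> s_def by simp
  have mp: "m_primary I" using assms(1) by (simp add: good_def)
  obtain n :: nat where n: "1 / (1 - s) < n" using reals_Archimedean2 by blast
  define l where "l = n + 1"
  have "real n * (1 - s) > 1" using n s1 by (simp add: field_simps)
  moreover have "real l * (1 - s) = real n * (1 - s) + (1 - s)" by (simp add: l_def algebra_simps)
  ultimately have l1: "real l * (1 - s) > 1" using s1 by linarith
  have "(\<lambda>i. l * g i) \<in> mpow I l" using assms(2) by (rule mpow_scal)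
  then obtain b where b: "b \<in> gens (mpow I l)" "b \<le> (\<lambda>i. l * g i)" using exists_gen by blast
  have wb: "wt I b \<le> real l * s" using wt_mono[OF b(2), of I] wt_mult[of I l g] s_def by simp
  obtain a where a: "(\<Sum>i\<in>UNIV. a i) = l - 1" "in_box I a b"
    using assms(1) b(1) unfolding good_def l_def by force
  have "real (l - 1) = (\<Sum>i\<in>UNIV. real (a i))" using a(1) by (metis of_nat_sum)
  also have "\<dots> = (\<Sum>i\<in>UNIV. real (a i * pdeg I i) / real (pdeg I i))"
    using pdeg_pos(1)[OF mp] by (intro sum.cong) auto
  also have "\<dots> \<le> wt I b" unfolding wt_def
    using a(2) by (intro sum_mono divide_right_mono) (auto simp: in_box_def simp flip: of_nat_mult)
  finally have "real (l - 1) \<le> wt I b" .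
  moreover have "real (l - 1) = real l - 1" unfolding l_def by simp
  ultimately have "real l - 1 \<le> real l * s" using wb by simp
  then show False using l1 by (simp add: algebra_simps)
qed

lemma mprod_up: assumes "monomial_ideal E" shows "monomial_ideal (mprod E F)"
  unfolding monomial_ideal_def mprod_def
proof (safe)
  fix a b c assume ab: "a \<in> E" "b \<in> F" "(\<lambda>i. a i + b i) \<le> c"
  have "a \<le> (\<lambda>i. c i - b i)" using ab(3) unfolding le_fun_def by (metis le_diff_conv2 le_add2 order_trans)
  then have "(\<lambda>i. c i - b i) \<in> E" using assms ab(1) unfolding monomial_ideal_def by blast
  moreover have "c = (\<lambda>i. (c i - b i) + b i)"
  proof (rule ext)
    fix i
    have "b i \<le> c i" using ab(3) unfolding le_fun_def by (metis add_leD2)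
    then show "c i = c i - b i + b i" by simp
  qed
  ultimately have h1: "(\<lambda>i. c i - b i) \<in> E" and h2: "c = (\<lambda>i. (c i - b i) + b i)" by blast+
  show "\<exists>a b. c = (\<lambda>i. a i + b i) \<and> a \<in> E \<and> b \<in> F"
    by (rule exI[of _ "\<lambda>i. c i - b i"], rule exI[of _ b]) (use h1 h2 ab(2) in simp)
qed

lemma four: "card (S::'a set) = 4 \<Longrightarrow> \<exists>i1 i2 i3 i4 :: 'a. i1 \<noteq> i2 \<and> i1 \<noteq> i3 \<and> i1 \<noteq> i4 \<and> i2 \<noteq> i3 \<and> i2 \<noteq> i4 \<and> i3 \<noteq> i4"
proof -
  assume "card S = 4"
  then have "card S = Suc (Suc (Suc (Suc 0)))" by simp
  then show ?thesis
    apply (simp only: card_Suc_eq)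
    apply (elim exE conjE)
    apply (rule_tac x=b in exI, rule_tac x=ba in exI, rule_tac x=bb in exI, rule_tac x=bc in exI)
    by auto
qed

theorem mainTheorem14:
  fixes I :: "('n::finite) expvec set" and k :: nat
  assumes "card (UNIV :: 'n set) \<ge> 4" and "good I" and "k \<ge> 2"
  shows "bad (mpow I k)"
proof -
  have mp: "m_primary I" using assms(2) by (simp add: good_def)
  define d where "d = pdeg I"
  have dpos: "\<And>i. d i > 0" unfolding d_def using pdeg_pos(1)[OF mp] .
  have dmem: "\<And>i. pure i (d i) \<in> I" unfolding d_def using pdeg_pos(2)[OF mp] .
  have gw: "\<forall>g\<in>I. wt I g \<ge> 1" using good_wt[OF assms(2)] by blast
  define J where "J = mpow I k"
  have wtJ: "\<And>b. b \<in> J \<Longrightarrow> wt I b \<ge> k" unfolding J_def using mpow_wt[OF gw] by blast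
  have zero0: "(\<lambda>_. 0) \<in> mpow I 0" by simp
  have pureJ: "pure j (k * d j) \<in> J" for j
  proof -
    have "(\<lambda>t. k * pure j (d j) t + (\<lambda>_. 0) t) \<in> mpow I (k + 0)"
      by (rule pmem[OF dmem zero0])
    moreover have "(\<lambda>t. k * pure j (d j) t + (\<lambda>_. 0) t) = pure j (k * d j)"
      by (auto simp: pure_def)
    ultimately show ?thesis unfolding J_def by simp
  qed
  have pdJ: "pdeg J j \<ge> k * d j" for j
  proof -
    have "pure j (pdeg J j) \<in> J" unfolding pdeg_def by (rule LeastI[of _ "k * d j"]) (rule pureJ)
    then have "wt I (pure j (pdeg J j)) \<ge> k" by (rule wtJ)
    then have "real (pdeg J j) / real (d j) \<ge> k" by (simp add: wt_pure d_def)
    then have "real (pdeg J j) \<ge> real k * real (d j)" using dpos[of j] by (simp add: field_simps)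
    then show ?thesis by (metis of_nat_le_iff of_nat_mult)
  qed
  have mpJ: "m_primary J"
  proof -
    obtain k' where k': "k = Suc k'" using assms(3) by (cases k) auto
    have "monomial_ideal I" using mp by (simp add: m_primary_def)
    then have "monomial_ideal J" unfolding J_def k' by (simp add: mprod_up)
    moreover have "(\<lambda>_. 0) \<notin> J"
    proof
      assume "(\<lambda>_. 0) \<in> J"
      then have "real k \<le> wt I (\<lambda>_. 0)" by (rule wtJ)
      then show False using assms(3) by (simp add: wt_zero)
    qed
    ultimately show ?thesis using pureJ unfolding m_primary_def by blast
  qed
  obtain S :: "'n set" where S: "card S = 4" using assms(1)
    by (meson obtain_subset_with_card_n)
  have "\<exists>i1 i2 i3 i4 :: 'n. i1 \<noteq> i2 \<and> i1 \<noteq> i3 \<and> i1 \<noteq> i4 \<and> i2 \<noteq> i3 \<and> i2 \<noteq> i4 \<and> i3 \<noteq> i4"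
    using four[OF S] .
  then obtain i1 i2 i3 i4 :: 'n where dist: "i1 \<noteq> i2" "i1 \<noteq> i3" "i1 \<noteq> i4" "i2 \<noteq> i3" "i2 \<noteq> i4" "i3 \<noteq> i4"
    by blast
  define P where "P i = pure i (d i)" for i
  define X where "X = (\<lambda>t. (k - 1) * P i1 t + (\<lambda>t. 1 * P i3 t + (\<lambda>_. 0) t) t)"
  define Y where "Y = (\<lambda>t. (k - 1) * P i2 t + (\<lambda>t. 1 * P i4 t + (\<lambda>_. 0) t) t)"
  define A where "A = (\<lambda>t. X t + (\<lambda>t. Y t + (\<lambda>_. 0) t) t)"
  have kk: "k - 1 + (1 + 0) = k" using assms(3) by simp
  have XJ: "X \<in> J"
  proof -
    have h: "(\<lambda>t. 1 * P i3 t + (\<lambda>_. 0) t) \<in> mpow I (1 + 0)"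
      unfolding P_def by (rule pmem[OF dmem zero0])
    have "X \<in> mpow I (k - 1 + (1 + 0))" unfolding X_def
      using h unfolding P_def by (rule pmem[OF dmem])
    then show ?thesis unfolding J_def kk .
  qed
  have YJ: "Y \<in> J"
  proof -
    have h: "(\<lambda>t. 1 * P i4 t + (\<lambda>_. 0) t) \<in> mpow I (1 + 0)"
      unfolding P_def by (rule pmem[OF dmem zero0])
    have "Y \<in> mpow I (k - 1 + (1 + 0))" unfolding Y_def
      using h unfolding P_def by (rule pmem[OF dmem])
    then show ?thesis unfolding J_def kk .
  qed
  have Y1: "(\<lambda>t. Y t + (\<lambda>_. 0) t) \<in> mpow J (Suc 0)"
    using YJ unfolding mpow.simps mprod_def
    by (intro CollectI exI[of _ Y] exI[of _ "\<lambda>_. (0::nat)"]) simp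
  have AJ: "A \<in> mpow J 2" unfolding numeral_2_eq_2
    using XJ Y1 unfolding A_def mpow.simps(2)[of J "Suc 0"] mprod_def
    by (intro CollectI exI[of _ X] exI[of _ "\<lambda>t. Y t + (\<lambda>_. 0) t"]) simp
  have wP: "wt I (P i) = 1" for i unfolding P_def using dpos[of i] by (simp add: wt_pure d_def)
  have wX: "wt I X = real k" unfolding X_def
    using assms(3) by (simp add: wt_add wt_mult wP wt_zero del: mult_1)
  have wY: "wt I Y = real k" unfolding Y_def
    using assms(3) by (simp add: wt_add wt_mult wP wt_zero del: mult_1)
  have wA: "wt I A = 2 * real k" unfolding A_def by (simp add: wt_add wX wY wt_zero)
  have wJ2: "wt I b \<ge> 2 * real k" if "b \<in> mpow J 2" for b
  proof -
    have "b \<in> mprod J (mpow J (Suc 0))" using that by (simp add: numeral_2_eq_2)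
    then obtain x r where xr: "x \<in> J" "r \<in> mpow J (Suc 0)" "b = (\<lambda>i. x i + r i)"
      unfolding mprod_def by blast
    have "r \<in> mprod J UNIV" using xr(2) by simp
    then obtain y z where yz: "y \<in> J" "r = (\<lambda>i. y i + z i)"
      unfolding mprod_def by blast
    have "wt I r \<ge> real k" using wtJ[OF yz(1)] wt_nonneg[of I z] wt_add[of I y z] yz(2) by simp
    then show ?thesis using wtJ[OF xr(1)] wt_add[of I x r] xr(3) by simp
  qed
  have Agen: "A \<in> gens (mpow J 2)"
    unfolding gens_def
  proof (safe)
    show "A \<in> mpow J 2" by (rule AJ)
    fix b assume b: "b \<in> mpow J 2" "b \<le> A"
    show "b = A"
    proof (rule ccontr)
      assume "b \<noteq> A"
      then have "wt I b < wt I A" using wt_strict[of I b A] b(2) dpos unfolding d_def by blast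
      then show False using wJ2[OF b(1)] wA by simp
    qed
  qed
  have Asmall: "A j < k * d j" for j
  proof -
    have Pj: "P i j = (if j = i then d j else 0)" for i by (auto simp: P_def pure_def)
    have Aj: "A j = (k - 1) * P i1 j + 1 * P i3 j + ((k - 1) * P i2 j + 1 * P i4 j)"
      by (simp add: A_def X_def Y_def)
    have "1 * d j \<le> (k - 1) * d j" using assms(3) by (intro mult_right_mono) auto
    then have dk: "d j \<le> (k - 1) * d j" by simp
    have "A j \<le> (k - 1) * d j"
    proof (cases "j = i1")
      case True then show ?thesis using dist unfolding Aj Pj by simp
    next
      case F1: False
      show ?thesis
      proof (cases "j = i2")
        case True then show ?thesis using dist unfolding Aj Pj by simp
      next
        case F2: False
        then show ?thesis using F1 dk dist unfolding Aj Pj by auto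
      qed
    qed
    also have "\<dots> < k * d j" using dpos[of j] assms(3) by simp
    finally show ?thesis .
  qed
  have notgood: "\<not> good J"
  proof
    assume "good J"
    then have G: "\<forall>l\<ge>1. \<forall>\<alpha>\<in>gens (mpow J l). \<exists>a. (\<Sum>i\<in>UNIV. a i) = l - 1 \<and> in_box J a \<alpha>"
      unfolding good_def by blast
    have "\<exists>a. (\<Sum>i\<in>UNIV. a i) = 2 - 1 \<and> in_box J a A"
      using G[rule_format, of 2 A] Agen by simp
    then obtain a where a: "(\<Sum>i\<in>UNIV. a i) = 2 - 1" "in_box J a A" by blast
    have "\<exists>j. a j \<noteq> 0"
    proof (rule ccontr)
      assume "\<not> (\<exists>j. a j \<noteq> 0)"
      then have "a = (\<lambda>_. 0)" by auto
      then show False using a(1) by simp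
    qed
    then obtain j where j: "a j \<ge> 1" by (auto simp: Suc_le_eq)
    have "a j * pdeg J j \<le> A j" using a(2) by (simp add: in_box_def)
    moreover have "pdeg J j \<le> a j * pdeg J j" using j by simp
    ultimately show False using pdJ[of j] Asmall[of j] by linarith
  qed
  show ?thesis unfolding bad_def J_def[symmetric] using mpJ notgood by blast
qed

end
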